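(* For every integer $s>2$ and every odd integer $k$ with $1<k<2s$, $F_{s,k}(2s)=0$.
   Context: For an integer $j\ge0$, $\binom{x}{j}=x(x-1)\cdots(x-j+1)/j!$ as a polynomial in $x$, and $\binom{x}{j}=0$ for $j<0$. For integers $s\ge1$, $k\ge1$, the Moser polynomial is $F_{s,k}(x)=\sum_{p=1}^{s}(-1)^{p-1}p^{k-1}\binom{x}{s-p}$. *)

theory Defs
  imports Complex_Main
begin

text \<open>Since 1 \<le> p \<le> s, s - p \<ge> 0, so no negative lower index occurs.\<close>
definition moserF :: "nat \<Rightarrow> nat \<Rightarrow> 'a::field_char_0 \<Rightarrow> 'a" where
  "moserF s k x = (\<Sum>p=1..s. (-1)^(p-1) * of_nat p ^ (k-1) * (x gchoose (s-p)))"

end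

theory Submission
  imports Defs
begin

lemma L1: "m < n \<Longrightarrow> (\<Sum>j\<le>n. (-1)^j * of_nat (n choose j) * of_nat j ^ m :: rat) = 0"
proof (induction n arbitrary: m)
  case 0 then show ?case by simp
next
  case (Suc n)
  show ?case
  proof (cases m)
    case 0
    then show ?thesis using choose_alternating_sum[of "Suc n", where 'a=rat] by simp
  next
    case (Suc m')
    with Suc.prems have mn: "m' < n" by simp
    have "(\<Sum>j\<le>Suc n. (-1)^j * of_nat (Suc n choose j) * of_nat j ^ m :: rat)
       = (\<Sum>i\<le>n. (-1)^(Suc i) * of_nat (Suc n choose Suc i) * of_nat (Suc i) ^ Suc m')"
      by (subst sum.atMost_Suc_shift) (simp add: Suc)
    also have "\<dots> = (\<Sum>i\<le>n. - of_nat (Suc n) * ((-1)^i * of_nat (n choose i) * of_nat (Suc i) ^ m'))"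
    proof (rule sum.cong[OF refl])
      fix i
      have e: "of_nat (Suc n choose Suc i) * of_nat (Suc i) = (of_nat (Suc n) * of_nat (n choose i) :: rat)"
        using Suc_times_binomial[of i n] by (metis of_nat_mult mult.commute)
      show "(-1)^(Suc i) * of_nat (Suc n choose Suc i) * of_nat (Suc i) ^ Suc m' = - of_nat (Suc n) * ((-1)^i * of_nat (n choose i) * of_nat (Suc i) ^ m' :: rat)"
      proof -
        have "(-1)^(Suc i) * of_nat (Suc n choose Suc i) * of_nat (Suc i) ^ Suc m' = - ((-1)^i * (of_nat (Suc n choose Suc i) * of_nat (Suc i)) * (of_nat (Suc i) ^ m' :: rat))"
          by (simp only: power_Suc mult_ac mult_minus_left power_minus1_even) simp
        also have "\<dots> = - ((-1)^i * (of_nat (Suc n) * of_nat (n choose i)) * (of_nat (Suc i) ^ m' :: rat))"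
          by (simp only: e)
        finally show ?thesis by (simp only: mult_ac mult_minus_left)
      qed
    qed
    also have "\<dots> = - of_nat (Suc n) * (\<Sum>i\<le>n. (-1)^i * of_nat (n choose i) * of_nat (Suc i) ^ m')"
      by (simp add: sum_distrib_left)
    also have "(\<Sum>i\<le>n. (-1)^i * of_nat (n choose i) * of_nat (Suc i) ^ m' :: rat)
       = (\<Sum>i\<le>n. \<Sum>t\<le>m'. of_nat (m' choose t) * ((-1)^i * of_nat (n choose i) * of_nat i ^ t))"
    proof (rule sum.cong[OF refl])
      fix i
      have "(of_nat (Suc i) :: rat) ^ m' = (of_nat i + 1) ^ m'" by (simp add: add.commute)
      also have "\<dots> = (\<Sum>t\<le>m'. of_nat (m' choose t) * of_nat i ^ t * 1 ^ (m' - t))"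
        by (rule binomial_ring)
      finally show "(-1)^i * of_nat (n choose i) * of_nat (Suc i) ^ m' = (\<Sum>t\<le>m'. of_nat (m' choose t) * ((-1)^i * of_nat (n choose i) * of_nat i ^ t :: rat))"
        by (simp add: sum_distrib_left algebra_simps)
    qed
    also have "\<dots> = (\<Sum>t\<le>m'. of_nat (m' choose t) * (\<Sum>i\<le>n. (-1)^i * of_nat (n choose i) * of_nat i ^ t))"
      by (subst sum.swap) (simp add: sum_distrib_left)
    also have "\<dots> = 0"
      using Suc.IH mn by (intro sum.neutral) auto
    finally show ?thesis by simp
  qed
qed

lemma L2: "m < n \<Longrightarrow> (\<Sum>j\<le>n. (-1)^j * of_nat (n choose j) * (c - of_nat j) ^ m :: rat) = 0"
proof -
  assume mn: "m < n"
  have "(\<Sum>j\<le>n. (-1)^j * of_nat (n choose j) * (c - of_nat j) ^ m :: rat)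
      = (\<Sum>j\<le>n. \<Sum>t\<le>m. (of_nat (m choose t) * c ^ t * (-1)^(m-t)) * ((-1)^j * of_nat (n choose j) * of_nat j ^ (m - t)))"
  proof (rule sum.cong[OF refl])
    fix j
    have "(c - of_nat j) ^ m = (c + (- of_nat j)) ^ m" by simp
    also have "\<dots> = (\<Sum>t\<le>m. of_nat (m choose t) * c ^ t * (- of_nat j) ^ (m - t))"
      by (rule binomial_ring)
    finally show "(-1)^j * of_nat (n choose j) * (c - of_nat j) ^ m = (\<Sum>t\<le>m. (of_nat (m choose t) * c ^ t * (-1)^(m-t)) * ((-1)^j * of_nat (n choose j) * of_nat j ^ (m - t)))"
      by (simp add: sum_distrib_left power_minus[of "of_nat j"] mult_ac)
  qed
  also have "\<dots> = (\<Sum>t\<le>m. (of_nat (m choose t) * c ^ t * (-1)^(m-t)) * (\<Sum>j\<le>n. (-1)^j * of_nat (n choose j) * of_nat j ^ (m - t)))"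
    by (subst sum.swap) (simp add: sum_distrib_left)
  also have "\<dots> = 0"
    using L1 mn by (intro sum.neutral) auto
  finally show ?thesis .
qed

theorem mainTheorem20:
  fixes s k :: nat
  assumes "s > 2" and "odd k" and "1 < k" and "k < 2 * s"
  shows "moserF s k (of_nat (2 * s) :: rat) = 0"
proof -
  define m where "m = k - 1"
  have em: "even m" and m0: "m > 0" and mlt: "m < 2 * s" using assms unfolding m_def by auto
  define h where "h j = (-1)^j * of_nat (2*s choose j) * (of_nat s - of_nat j :: rat) ^ m" for j :: nat
  define t where "t p = (-1)^(p-1) * of_nat p ^ (k-1) * (of_nat (2*s) gchoose (s-p) :: rat)" for p :: nat
  have M: "moserF s k (of_nat (2 * s) :: rat) = (\<Sum>p=1..s. t p)"
    unfolding moserF_def t_def by simp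
  have Z: "(\<Sum>j\<le>2*s. h j) = 0" unfolding h_def using L2[OF mlt] by simp
  have S1: "(\<Sum>j\<le>2*s. h j) = (\<Sum>j\<in>{0..<s}. h j) + (\<Sum>j\<in>{s..<2*s+1}. h j)"
  proof -
    have "{..2*s} = {0..<2*s+1}" by auto
    then show ?thesis by (simp add: sum.atLeastLessThan_concat)
  qed
  have S2: "(\<Sum>j\<in>{s..<2*s+1}. h j) = h s + (\<Sum>p=1..s. h (p + s))"
  proof -
    have "{s..<2*s+1} = {0+s..s+s}" by auto
    then have "(\<Sum>j\<in>{s..<2*s+1}. h j) = (\<Sum>p=0..s. h (p + s))"
      by (simp only: sum.shift_bounds_cl_nat_ivl)
    also have "\<dots> = h s + (\<Sum>p=1..s. h (p + s))"
      by (subst sum.atLeast_Suc_atMost) auto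
    finally show ?thesis .
  qed
  have S3: "(\<Sum>j\<in>{0..<s}. h j) = (\<Sum>p=1..s. h (s - p))"
  proof -
    have "(\<Sum>j\<in>{0..<s}. h j) = (\<Sum>i<s. h (s - Suc i))"
      using sum.nat_diff_reindex[of h s] by (simp add: atLeast0LessThan)
    also have "\<dots> = (\<Sum>i\<in>{0..<s}. h (s - Suc i))" by (simp add: atLeast0LessThan)
    also have "\<dots> = (\<Sum>p\<in>{Suc 0..<Suc s}. h (s - p))"
      by (simp only: sum.shift_bounds_Suc_ivl)
    also have "{Suc 0..<Suc s} = {1..s}" by auto
    finally show ?thesis .
  qed
  have hs: "h s = 0" unfolding h_def using m0 by simp
  have sg: "(-1::rat)^(s-p) = (-1)^(s-1) * (-1)^(p-1)" if "1 \<le> p" "p \<le> s" for p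
    using that by (auto simp: minus_one_power_iff)
  have sg2: "(-1::rat)^(p+s) = (-1)^(s-p)" if "1 \<le> p" "p \<le> s" for p
    using that by (auto simp: minus_one_power_iff)
  have H1: "h (s - p) = (-1)^(s-1) * t p" if "1 \<le> p" "p \<le> s" for p
  proof -
    have "of_nat s - of_nat (s - p) = (of_nat p :: rat)" using that by (simp add: of_nat_diff)
    moreover have g: "(of_nat (2*s) gchoose (s-p) :: rat) = of_nat (2*s choose (s-p))"
      by (rule binomial_gbinomial[symmetric])
    ultimately show ?thesis unfolding h_def t_def m_def g using sg[OF that]
      by (simp add: mult_ac)
  qed
  have H2: "h (p + s) = (-1)^(s-1) * t p" if "1 \<le> p" "p \<le> s" for p
  proof -
    have a: "of_nat s - of_nat (p + s) = - (of_nat p :: rat)" by simp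
    have b: "(- (of_nat p :: rat)) ^ m = of_nat p ^ m" using em by simp
    have c: "2*s choose (p + s) = 2*s choose (s - p)"
      using binomial_symmetric[of "p+s" "2*s"] that by (simp add: numeral_2_eq_2)
    have "h (p + s) = h (s - p)" unfolding h_def using a b c sg2[OF that] that
      by (simp add: of_nat_diff)
    then show ?thesis using H1[OF that] by simp
  qed
  have "0 = (\<Sum>p=1..s. h (s - p)) + h s + (\<Sum>p=1..s. h (p + s))"
    using Z S1 S2 S3 by simp
  also have "\<dots> = 2 * (-1)^(s-1) * (\<Sum>p=1..s. t p)"
    using H1 H2 hs by (simp add: sum_distrib_left sum_distrib_right mult_ac)
  finally have "2 * (-1)^(s-1) * (\<Sum>p=1..s. t p) = 0" by simp
  then show ?thesis using M by simp
qed
end
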